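(* Let $\rho_{ABC}\in M_2(\mathbb{C})\otimes M_2(\mathbb{C})\otimes M_2(\mathbb{C})$ be a three-qubit state with $\mathrm{rank}(\rho_{ABC})=3$. Let $\{P_{a|0}\}_{a=0}^1,\{P_{a|1}\}_{a=0}^1$ be two nontrivial projective measurements on subsystem $A$ and $\{Q_{b|0}\}_{b=0}^1,\{Q_{b|1}\}_{b=0}^1$ two nontrivial projective measurements on subsystem $B$ that are different up to relabeling. Define $\sigma_{ab|xy}=\mathrm{Tr}_{AB}\big((P_{a|x}\otimes Q_{b|y}\otimes\mathbb{1})\rho_{ABC}\big)$ for $a,b,x,y\in\{0,1\}$. Then neither of the following two rank patterns can occur: (1) $\mathrm{rank}(\sigma_{ab|00})=1$ and $\mathrm{rank}(\sigma_{ab|11})=1$ for all $a,b$, while $\mathrm{rank}(\sigma_{ab|01})=\mathrm{rank}(\sigma_{ab|10})=2$ for all $a,b$; (2) for all $a,y\in\{0,1\}$: $\mathrm{rank}(\sigma_{a0|0y})=1$, $\mathrm{rank}(\sigma_{a1|0y})=2$, $\mathrm{rank}(\sigma_{a0|1y})=2$ and $\mathrm{rank}(\sigma_{a1|1y})=1$.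
   Context: A nontrivial projective measurement on $\mathbb{C}^2$ is a pair $\{P_0,P_1\}$ of rank-one orthogonal projections with $P_0+P_1=\mathbb{1}$. Two such measurements $\{Q_{b|0}\}_{b=0}^1,\{Q_{b|1}\}_{b=0}^1$ are "different up to relabeling" if $Q_{0|0}\ne Q_{0|1}$ and $Q_{0|0}\ne Q_{1|1}$. *)

theory Defs
  imports "HOL-Analysis.Analysis"
begin

text \<open>Qubit Hilbert space C^2 is indexed by the two-element type 2; the three-qubit
 space C^2 (x) C^2 (x) C^2 is indexed by 2 \<times> 2 \<times> 2 (first component = A, second = B,
 third = C).\<close>

definition cadj :: "complex^'n^'m \<Rightarrow> complex^'m^'n" where
  "cadj A = (\<chi> i j. cnj (A $ j $ i))"

definition orth_proj :: "complex^'n^'n \<Rightarrow> bool" where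
  "orth_proj P \<longleftrightarrow> P ** P = P \<and> cadj P = P"

definition rank_one_proj :: "complex^'n^'n \<Rightarrow> bool" where
  "rank_one_proj P \<longleftrightarrow> orth_proj P \<and> rank P = 1"

definition nontrivial_pm :: "complex^2^2 \<Rightarrow> complex^2^2 \<Rightarrow> bool" where
  "nontrivial_pm P0 P1 \<longleftrightarrow> rank_one_proj P0 \<and> rank_one_proj P1 \<and> P0 + P1 = mat 1"

definition psd :: "complex^'n^'n \<Rightarrow> bool" where
  "psd A \<longleftrightarrow> (\<forall>v::complex^'n. \<exists>r::real. r \<ge> 0 \<and>
      (\<Sum>i\<in>UNIV. \<Sum>j\<in>UNIV. cnj (v $ i) * A $ i $ j * v $ j) = complex_of_real r)"

definition density_op :: "complex^'n^'n \<Rightarrow> bool" where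
  "density_op \<rho> \<longleftrightarrow> psd \<rho> \<and> trace \<rho> = 1"

definition tensor_PQ1 :: "complex^2^2 \<Rightarrow> complex^2^2 \<Rightarrow> complex^(2\<times>2\<times>2)^(2\<times>2\<times>2)" where
  "tensor_PQ1 P Q = (\<chi> u v. P $ fst u $ fst v * Q $ fst (snd u) $ fst (snd v) *
                        (if snd (snd u) = snd (snd v) then 1 else 0))"

definition ptrace_AB :: "complex^(2\<times>2\<times>2)^(2\<times>2\<times>2) \<Rightarrow> complex^2^2" where
  "ptrace_AB M = (\<chi> k k'. \<Sum>i\<in>UNIV. \<Sum>j\<in>UNIV. M $ (i, j, k) $ (i, j, k'))"

definition assemblage ::
  "complex^(2\<times>2\<times>2)^(2\<times>2\<times>2) \<Rightarrow> (nat \<Rightarrow> nat \<Rightarrow> complex^2^2) \<Rightarrow> (nat \<Rightarrow> nat \<Rightarrow> complex^2^2)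
     \<Rightarrow> nat \<Rightarrow> nat \<Rightarrow> nat \<Rightarrow> nat \<Rightarrow> complex^2^2" where
  "assemblage \<rho> P Q a b x y = ptrace_AB (tensor_PQ1 (P a x) (Q b y) ** \<rho>)"

end

theory Submission
  imports Defs
begin

definition vA :: "complex^2 \<Rightarrow> complex^('b::finite) \<Rightarrow> complex^(2\<times>'b)" where
  "vA p y = (\<chi> u. p $ fst u * y $ snd u)"

definition d2 :: "complex^2 \<Rightarrow> complex^2 \<Rightarrow> complex" where
  "d2 u v = u$1 * v$2 - u$2 * v$1"

lemma vA_nth[simp]: "vA p y $ (i, j) = p $ i * y $ j"
  by (simp add: vA_def)

lemma vA_add: "vA p (y + z) = vA p y + vA p z"
  by (simp add: vec_eq_iff distrib_left)
lemma vA_scale: "vA p (c *s y) = c *s vA p y"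
  by (simp add: vec_eq_iff)
lemma vA_zero[simp]: "vA p 0 = 0"
  by (simp add: vec_eq_iff)
lemma vA_lcomb: "vA (a *s p + b *s q) y = a *s vA p y + b *s vA q y"
  by (simp add: vec_eq_iff algebra_simps)

lemma vA_lin: "Vector_Spaces.linear (*s) (*s) (vA p)"
  by (simp add: Vector_Spaces.linear_iff vA_add vA_scale vec.vector_space_axioms)

lemma vA_eq0: assumes "p \<noteq> 0" "vA p y = 0" shows "y = 0"
proof -
  obtain i where i: "p $ i \<noteq> 0" using assms(1) by (auto simp: vec_eq_iff)
  have "p $ i * y $ j = 0" for j using arg_cong[OF assms(2), of "\<lambda>v. v $ (i,j)"] by simp
  then show ?thesis using i by (simp add: vec_eq_iff)
qed

lemma vA_inj: "p \<noteq> 0 \<Longrightarrow> inj (vA p)"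
proof (rule injI)
  fix y z assume p: "p \<noteq> 0" and e: "vA p y = vA p z"
  have "vA p (y - z) = vA p y - vA p z" by (simp add: vec_eq_iff algebra_simps)
  then have "vA p (y - z) = 0" using e by simp
  then have "y - z = 0" by (rule vA_eq0[OF p])
  then show "y = z" by simp
qed

lemma L_indep: assumes "d2 p q \<noteq> 0" "vA p a + vA q b = 0" shows "a = 0 \<and> b = 0"
proof -
  have e: "p $ i * a $ j + q $ i * b $ j = 0" for i j
    using arg_cong[OF assms(2), of "\<lambda>v. v $ (i,j)"] by simp
  have "a $ j = 0 \<and> b $ j = 0" for j
  proof -
    have 1: "p$1 * a$j + q$1 * b$j = 0" and 2: "p$2 * a$j + q$2 * b$j = 0" using e by auto
    have "d2 p q * a$j = q$2 * (p$1 * a$j + q$1 * b$j) - q$1 * (p$2 * a$j + q$2 * b$j)"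
      unfolding d2_def by (simp add: algebra_simps)
    then have "d2 p q * a$j = 0" using 1 2 by simp
    moreover have "d2 p q * b$j = p$1 * (p$2 * a$j + q$2 * b$j) - p$2 * (p$1 * a$j + q$1 * b$j)"
      unfolding d2_def by (simp add: algebra_simps)
    then have "d2 p q * b$j = 0" using 1 2 by simp
    ultimately show ?thesis using assms(1) by simp
  qed
  then show ?thesis by (simp add: vec_eq_iff)
qed

lemma cramer: assumes "d2 p q \<noteq> 0"
  shows "r = (d2 r q / d2 p q) *s p + (d2 p r / d2 p q) *s q"
proof -
  have "r $ i = (d2 r q / d2 p q) * p $ i + (d2 p r / d2 p q) * q $ i" for i
  proof -
    have "i = 1 \<or> i = 2" by (rule exhaust_2)
    then have h: "d2 r q * p $ i + d2 p r * q $ i = r$i * d2 p q"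
      by (auto simp: d2_def algebra_simps)
    from h have "r $ i = (d2 r q * p $ i + d2 p r * q $ i) / d2 p q" using assms by (simp add: eq_divide_eq)
    also have "... = (d2 r q / d2 p q) * p $ i + (d2 p r / d2 p q) * q $ i" by (simp add: add_divide_distrib)
    finally show ?thesis .
  qed
  then show ?thesis by (simp add: vec_eq_iff)
qed

definition ssum :: "'a::ab_group_add set \<Rightarrow> 'a set \<Rightarrow> 'a set" where
  "ssum A B = {x + y |x y. x \<in> A \<and> y \<in> B}"

lemma ssum_sub: "vec.subspace A \<Longrightarrow> vec.subspace B \<Longrightarrow> vec.subspace (ssum A B)"
  unfolding ssum_def by (rule vec.subspace_sums)

lemma ssum_le: "vec.subspace W \<Longrightarrow> A \<subseteq> W \<Longrightarrow> B \<subseteq> W \<Longrightarrow> ssum A B \<subseteq> W"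
  unfolding ssum_def using vec.subspace_add by blast

lemma ssum_in: "x \<in> A \<Longrightarrow> y \<in> B \<Longrightarrow> x + y \<in> ssum A B"
  unfolding ssum_def by blast

lemma dim_ssum: assumes "vec.subspace A" "vec.subspace B" "A \<inter> B \<subseteq> {0}"
  shows "vec.dim (ssum A B) = vec.dim A + vec.dim B"
proof -
  have z: "vec.dim (A \<inter> B) = 0" using assms(3) vec.dim_eq_0 by blast
  show ?thesis using vec.dim_sums_Int[OF assms(1,2)] z unfolding ssum_def by linarith
qed

lemma meet: assumes "vec.subspace A" "vec.subspace B" "vec.subspace W" "A \<subseteq> W" "B \<subseteq> W"
  "vec.dim W < vec.dim A + vec.dim B"
  shows "\<exists>x. x \<noteq> 0 \<and> x \<in> A \<and> x \<in> B"
proof (rule ccontr)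
  assume "\<not> ?thesis"
  then have "A \<inter> B \<subseteq> {0}" by auto
  then have "vec.dim (ssum A B) = vec.dim A + vec.dim B" using dim_ssum assms by blast
  moreover have "vec.dim (ssum A B) \<le> vec.dim W" using vec.dim_subset ssum_le assms by blast
  ultimately show False using assms(6) by simp
qed

lemma line_dim: "v \<noteq> 0 \<Longrightarrow> vec.dim (vec.span {v}) = 1"
  by (simp add: vec.dim_span)

lemma dim_img: "p \<noteq> 0 \<Longrightarrow> vec.dim (vA p ` S) = vec.dim S"
  using vec.dim_image_eq[OF vA_lin] inj_on_subset[OF vA_inj] by blast

lemma sub_img: "vec.subspace S \<Longrightarrow> vec.subspace (vA p ` S)"
  using vec.linear_subspace_image[OF vA_lin] by blast

definition Yset :: "(complex^(2\<times>2\<times>2)) set \<Rightarrow> complex^2 \<Rightarrow> (complex^(2\<times>2)) set" where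
  "Yset K p = {y. vA p y \<in> K}"

lemma Y_sub: "vec.subspace K \<Longrightarrow> vec.subspace (Yset K p)"
  unfolding Yset_def by (rule vec.linear_subspace_linear_preimage[OF vA_lin])

lemma d2_nz1: "d2 q q' \<noteq> 0 \<Longrightarrow> q \<noteq> 0"
  by (auto simp: d2_def)

lemma d2_comm: "d2 q q' = - d2 q' q"
  by (simp add: d2_def algebra_simps)

lemma vA_nz: "x \<noteq> 0 \<Longrightarrow> q \<noteq> 0 \<Longrightarrow> vA q x \<noteq> 0"
  using vA_eq0 by blast

lemma two_dim:
  assumes "d2 q q' \<noteq> 0" "x \<noteq> 0" "x' \<noteq> 0"
  shows "vec.dim (vec.span {vA q x, vA q' x'}) = 2"
proof -
  have q: "q \<noteq> 0" and q': "q' \<noteq> 0" using assms(1) by (auto simp: d2_def)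
  have e: "{vA q x, vA q' x'} = {vA q x} \<union> {vA q' x'}" by auto
  have "vec.span {vA q x} \<inter> vec.span {vA q' x'} \<subseteq> {0}"
  proof
    fix w assume "w \<in> vec.span {vA q x} \<inter> vec.span {vA q' x'}"
    then have "w \<in> range (\<lambda>k. k *s vA q x)" "w \<in> range (\<lambda>k. k *s vA q' x')"
      unfolding vec.span_singleton by auto
    then obtain c c' where w: "w = c *s vA q x" "w = c' *s vA q' x'"
      by blast
    then have eq: "c *s vA q x = c' *s vA q' x'" by simp
    have "(vA q (c *s x) + vA q' ((- c') *s x')) $ k = 0" for k
    proof (cases k)
      case (Pair i j)
      have "(c *s vA q x) $ (i,j) = (c' *s vA q' x') $ (i,j)" using eq by simp
      then show ?thesis by (simp add: Pair algebra_simps)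
    qed
    then have "vA q (c *s x) + vA q' ((- c') *s x') = 0" by (simp add: vec_eq_iff)
    then have "c *s x = 0" using L_indep assms(1) by blast
    then have "c = 0" using assms(2) by (simp add: vector_mul_eq_0)
    then show "w \<in> {0}" using w by simp
  qed
  then have "vec.dim (ssum (vec.span {vA q x}) (vec.span {vA q' x'})) = 2"
    using dim_ssum[of "vec.span {vA q x}" "vec.span {vA q' x'}"] vA_nz[OF assms(2) q] vA_nz[OF assms(3) q']
    by simp
  then show ?thesis unfolding ssum_def e vec.span_Un by simp
qed

lemma par: assumes "d2 u v = 0" "v \<noteq> 0" shows "\<exists>l. u = l *s v"
proof (cases "v$1 = 0")
  case True
  have v2: "v$2 \<noteq> 0"
  proof
    assume "v$2 = 0"
    then have "v = 0" using True by (simp add: vec_eq_iff forall_2)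
    then show False using assms(2) by simp
  qed
  define c where "c = u$2 / v$2"
  have "u $ i = c * v $ i" for i
  proof -
    have "u$1 * v$2 = 0" using assms(1) True by (simp add: d2_def)
    then have "u$1 = 0" using v2 by simp
    then show ?thesis using True v2 exhaust_2[of i] unfolding c_def by auto
  qed
  then have "u = c *s v" by (simp add: vec_eq_iff)
  then show ?thesis by blast
next
  case False
  define c where "c = u$1 / v$1"
  have "u $ i = c * v $ i" for i
  proof -
    have "u$1 * v$2 = u$2 * v$1" using assms(1) by (simp add: d2_def)
    then have "u$2 = (u$1 / v$1) * v$2" using False by (simp add: field_simps)
    then show ?thesis using False exhaust_2[of i] unfolding c_def by auto
  qed
  then have "u = c *s v" by (simp add: vec_eq_iff)
  then show ?thesis by blast
qed

lemma d2_comb: "d2 (a *s p + b *s q) (c *s p + d *s q) = (a * d - b * c) * d2 p q"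
  by (simp add: d2_def algebra_simps)

lemma decomp: assumes "d2 p0 p1 \<noteq> 0" "r = a *s p0 + b *s p1" "vA r y = vA p0 u + vA p1 v"
  shows "u = a *s y \<and> v = b *s y"
proof -
  have "vA p0 (a *s y - u) + vA p1 (b *s y - v) = 0"
    using assms(3) unfolding assms(2) by (simp add: vec_eq_iff algebra_simps)
  then have "a *s y - u = 0 \<and> b *s y - v = 0" using L_indep assms(1) by blast
  then show ?thesis by simp
qed

lemma span2_sub: "vec.subspace S \<Longrightarrow> a \<in> S \<Longrightarrow> b \<in> S \<Longrightarrow> vec.span {a, b} \<subseteq> S"
  by (simp add: vec.span_minimal)

lemma d2_nz2: "d2 q q' \<noteq> 0 \<Longrightarrow> q' \<noteq> 0"
  by (auto simp: d2_def)

lemma core: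
  fixes K :: "(complex^(2\<times>2\<times>2)) set"
  assumes K: "vec.subspace K" "vec.dim K \<le> 5"
  and dp: "d2 p0 p1 \<noteq> 0" and dr: "d2 r0 r1 \<noteq> 0"
  and Z0: "z0 \<noteq> 0" "vA p0 (vA q0 z0) \<in> K" "d2 q0 t0 \<noteq> 0" "w0 \<noteq> 0" "vA p0 (vA t0 w0) \<in> K"
  and Z1: "z1 \<noteq> 0" "vA p1 (vA q0 z1) \<in> K" "d2 q0 t1 \<noteq> 0" "w1 \<noteq> 0" "vA p1 (vA t1 w1) \<in> K"
  and R0: "d2 s0 s0' \<noteq> 0" "u0 \<noteq> 0" "u0' \<noteq> 0" "vA r0 (vA s0 u0) \<in> K" "vA r0 (vA s0' u0') \<in> K"
  and R1: "d2 s1 s1' \<noteq> 0" "v1 \<noteq> 0" "v1' \<noteq> 0" "vA r1 (vA s1 v1) \<in> K" "vA r1 (vA s1' v1') \<in> K"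
  and N0: "\<And>x. vA r0 (vA q0 x) \<in> K \<Longrightarrow> x = 0"
  and N1: "\<And>x. vA r1 (vA q0 x) \<in> K \<Longrightarrow> x = 0"
  shows False
proof -
  define Y where "Y = Yset K"
  have Ys: "vec.subspace (Y p)" for p unfolding Y_def using Y_sub K(1) .
  have Ymem: "y \<in> Y p \<longleftrightarrow> vA p y \<in> K" for y p unfolding Y_def Yset_def by simp
  define a0 b0 where "a0 = d2 r0 p1 / d2 p0 p1" and "b0 = d2 p0 r0 / d2 p0 p1"
  define a1 b1 where "a1 = d2 r1 p1 / d2 p0 p1" and "b1 = d2 p0 r1 / d2 p0 p1"
  have hr0: "r0 = a0 *s p0 + b0 *s p1" unfolding a0_def b0_def using cramer[OF dp] .
  have hr1: "r1 = a1 *s p0 + b1 *s p1" unfolding a1_def b1_def using cramer[OF dp] .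
  have vr0: "vA r0 y = a0 *s vA p0 y + b0 *s vA p1 y" for y unfolding hr0 by (rule vA_lcomb)
  have vr1: "vA r1 y = a1 *s vA p0 y + b1 *s vA p1 y" for y unfolding hr1 by (rule vA_lcomb)
  have p0nz: "p0 \<noteq> 0" using dp d2_nz1 by blast
  have p1nz: "p1 \<noteq> 0" using dp d2_nz2 by blast
  have q0nz: "q0 \<noteq> 0" using Z0(3) d2_nz1 by blast
  have r0nz: "r0 \<noteq> 0" using dr d2_nz1 by blast
  have r1nz: "r1 \<noteq> 0" using dr d2_nz2 by blast
  have Kscale: "c *s x \<in> K" if "x \<in> K" for c x using K(1) that vec.subspace_scale by blast
  have Kadd: "x + y \<in> K" if "x \<in> K" "y \<in> K" for x y using K(1) that vec.subspace_add by blast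
  have a0nz: "a0 \<noteq> 0"
  proof
    assume "a0 = 0"
    then have "vA r0 (vA q0 z1) = b0 *s vA p1 (vA q0 z1)" using vr0 by simp
    then have "vA r0 (vA q0 z1) \<in> K" using Kscale Z1(2) by simp
    then show False using N0 Z1(1) by blast
  qed
  have b0nz: "b0 \<noteq> 0"
  proof
    assume "b0 = 0"
    then have "vA r0 (vA q0 z0) = a0 *s vA p0 (vA q0 z0)" using vr0 by simp
    then have "vA r0 (vA q0 z0) \<in> K" using Kscale Z0(2) by simp
    then show False using N0 Z0(1) by blast
  qed
  have a1nz: "a1 \<noteq> 0"
  proof
    assume "a1 = 0"
    then have "vA r1 (vA q0 z1) = b1 *s vA p1 (vA q0 z1)" using vr1 by simp
    then have "vA r1 (vA q0 z1) \<in> K" using Kscale Z1(2) by simp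
    then show False using N1 Z1(1) by blast
  qed
  have b1nz: "b1 \<noteq> 0"
  proof
    assume "b1 = 0"
    then have "vA r1 (vA q0 z0) = a1 *s vA p0 (vA q0 z0)" using vr1 by simp
    then have "vA r1 (vA q0 z0) \<in> K" using Kscale Z0(2) by simp
    then show False using N1 Z0(1) by blast
  qed
  have cross: "a0 * b1 - b0 * a1 \<noteq> 0"
    using dr unfolding hr0 hr1 d2_comb by auto
  have inter0: "vA r0 y \<in> K" if "y \<in> Y p0" "y \<in> Y p1" for y
  proof -
    have "vA p0 y \<in> K" "vA p1 y \<in> K" using that Ymem by auto
    then show ?thesis unfolding vr0 using Kscale Kadd by blast
  qed
  have dz: "d2 z0 z1 \<noteq> 0"
  proof
    assume "d2 z0 z1 = 0"
    then obtain l where l: "z0 = l *s z1" using par Z1(1) by blast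
    have "vA q0 z0 \<in> Y p1" using l Ymem Z1(2) Kscale by (simp add: vA_scale)
    moreover have "vA q0 z0 \<in> Y p0" using Ymem Z0(2) by simp
    ultimately have "vA r0 (vA q0 z0) \<in> K" using inter0 by blast
    then show False using N0 Z0(1) by blast
  qed
  define A0 where "A0 = vec.span {vA q0 z0, vA t0 w0}"
  define A1 where "A1 = vec.span {vA q0 z1, vA t1 w1}"
  define C0 where "C0 = vec.span {vA s0 u0, vA s0' u0'}"
  define D where "D = vec.span {vA s1 v1, vA s1' v1'}"
  have A0s: "vec.subspace A0" and A1s: "vec.subspace A1" and C0s: "vec.subspace C0" and Ds: "vec.subspace D"
    unfolding A0_def A1_def C0_def D_def by auto
  have dA0: "vec.dim A0 = 2" unfolding A0_def using two_dim Z0 by blast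
  have dA1: "vec.dim A1 = 2" unfolding A1_def using two_dim Z1 by blast
  have dC0: "vec.dim C0 = 2" unfolding C0_def using two_dim R0 by blast
  have dD: "vec.dim D = 2" unfolding D_def using two_dim R1 by blast
  have A0Y: "A0 \<subseteq> Y p0" unfolding A0_def using span2_sub Ys Ymem Z0 by blast
  have A1Y: "A1 \<subseteq> Y p1" unfolding A1_def using span2_sub Ys Ymem Z1 by blast
  have C0Y: "C0 \<subseteq> Y r0" unfolding C0_def using span2_sub Ys Ymem R0 by blast
  have DY: "D \<subseteq> Y r1" unfolding D_def using span2_sub Ys Ymem R1 by blast
  have a0A: "vA q0 z0 \<in> A0" unfolding A0_def by (simp add: vec.span_base)
  have a1A: "vA q0 z1 \<in> A1" unfolding A1_def by (simp add: vec.span_base)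
  define H where "H = ssum A0 A1"
  have Hs: "vec.subspace H" unfolding H_def using ssum_sub A0s A1s by blast
  have A0H: "A0 \<subseteq> H" unfolding H_def ssum_def using A1s vec.subspace_0 by force
  have A1H: "A1 \<subseteq> H" unfolding H_def ssum_def using A0s vec.subspace_0 by force
  define Q0 where "Q0 = range (vA q0 :: complex^2 \<Rightarrow> complex^(2\<times>2))"
  have Q0s: "vec.subspace Q0" unfolding Q0_def using sub_img vec.subspace_UNIV by blast
  have dQ0: "vec.dim Q0 = 2" unfolding Q0_def
  proof -
    have "vec.dim (vA q0 ` (UNIV :: (complex^2) set)) = vec.dim (UNIV :: (complex^2) set)"
      using dim_img[OF q0nz] by blast
    also have "\<dots> = 2" using vec_dim_card[where 'a=complex and 'n=2] by simp
    finally show "vec.dim (range (vA q0 :: complex^2 \<Rightarrow> complex^(2\<times>2))) = 2" .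
  qed
  have Q0H: "Q0 \<subseteq> H"
  proof
    fix w assume "w \<in> Q0"
    then obtain x where x: "w = vA q0 x" unfolding Q0_def by blast
    define c0 c1 where "c0 = d2 x z1 / d2 z0 z1" and "c1 = d2 z0 x / d2 z0 z1"
    have "x = c0 *s z0 + c1 *s z1" unfolding c0_def c1_def using cramer[OF dz] .
    then have "w = c0 *s vA q0 z0 + c1 *s vA q0 z1" using x by (simp add: vA_add vA_scale)
    moreover have "c0 *s vA q0 z0 \<in> A0" using a0A A0s vec.subspace_scale by blast
    moreover have "c1 *s vA q0 z1 \<in> A1" using a1A A1s vec.subspace_scale by blast
    ultimately show "w \<in> H" unfolding H_def using ssum_in by blast
  qed
  define L where "L = ssum (vA p0 ` A0) (vA p1 ` A1)"
  have Ls: "vec.subspace L" unfolding L_def using ssum_sub sub_img A0s A1s by blast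
  have LK: "L \<subseteq> K"
  proof -
    have "vA p0 ` A0 \<subseteq> K" using A0Y Ymem by blast
    moreover have "vA p1 ` A1 \<subseteq> K" using A1Y Ymem by blast
    ultimately show ?thesis unfolding L_def using ssum_le[OF K(1)] by blast
  qed
  have dL: "vec.dim L = 4"
  proof -
    have "vA p0 ` A0 \<inter> vA p1 ` A1 \<subseteq> {0}"
    proof
      fix w assume "w \<in> vA p0 ` A0 \<inter> vA p1 ` A1"
      then obtain u v where w: "w = vA p0 u" "w = vA p1 v" by blast
      have "vA p1 (- v) = - vA p1 v" by (simp add: vec_eq_iff)
      then have "vA p0 u + vA p1 (- v) = 0" using w by simp
      then have "u = 0" using L_indep dp by blast
      then show "w \<in> {0}" using w by simp
    qed
    then have "vec.dim L = vec.dim (vA p0 ` A0) + vec.dim (vA p1 ` A1)"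
      unfolding L_def by (rule dim_ssum[OF sub_img[OF A0s] sub_img[OF A1s]])
    then show ?thesis using dim_img[OF p0nz, of A0] dim_img[OF p1nz, of A1] dA0 dA1 by simp
  qed
  have dec0: "u = a0 *s y \<and> v = b0 *s y" if "vA r0 y = vA p0 u + vA p1 v" for y u v
    using decomp[OF dp hr0 that] .
  have dec1: "u = a1 *s y \<and> v = b1 *s y" if "vA r1 y = vA p0 u + vA p1 v" for y u v
    using decomp[OF dp hr1 that] .
  have Lmem: "\<exists>u v. u \<in> A0 \<and> v \<in> A1 \<and> w = vA p0 u + vA p1 v" if "w \<in> L" for w
    using that unfolding L_def ssum_def by blast
  obtain y where y: "y \<noteq> 0" "y \<in> A0" "y \<in> A1"
  proof -
    define M where "M = vA r0 ` C0"
    have Ms: "vec.subspace M" unfolding M_def using sub_img C0s by blast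
    have MK: "M \<subseteq> K" unfolding M_def using C0Y Ymem by blast
    have dM: "vec.dim M = 2" unfolding M_def using dim_img[OF r0nz, of C0] dC0 by simp
    obtain w where w: "w \<noteq> 0" "w \<in> L" "w \<in> M"
      using meet[OF Ls Ms K(1) LK MK] dL dM K(2) by auto
    obtain y where y: "y \<in> C0" "w = vA r0 y" using w(3) unfolding M_def by blast
    obtain u v where uv: "u \<in> A0" "v \<in> A1" "w = vA p0 u + vA p1 v" using Lmem w(2) by blast
    have "vA r0 y = vA p0 u + vA p1 v" using y(2) uv(3) by simp
    then have "u = a0 *s y \<and> v = b0 *s y" by (rule dec0)
    then have yy: "y = (1/a0) *s u" "y = (1/b0) *s v" using a0nz b0nz by (simp_all add: vector_smult_assoc)
    have h0: "(1/a0) *s u \<in> A0" using vec.subspace_scale[OF A0s uv(1)] .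
    have h1: "(1/b0) *s v \<in> A1" using vec.subspace_scale[OF A1s uv(2)] .
    have yA0: "y \<in> A0" using yy(1) h0 by simp
    have yA1: "y \<in> A1" using yy(2) h1 by simp
    have ynz: "y \<noteq> 0" using w(1) y(2) by auto
    show ?thesis by (rule that[OF ynz yA0 yA1])
  qed
  have dI: "vec.dim (A0 \<inter> A1) \<ge> 1"
  proof -
    have "{y} \<subseteq> A0 \<inter> A1" using y by auto
    then have "vec.dim {y} \<le> vec.dim (A0 \<inter> A1)" by (rule vec.dim_subset)
    moreover have "vec.dim {y} = 1" using y(1) vec.dim_singleton by simp
    ultimately show ?thesis by simp
  qed
  have dH: "vec.dim H \<le> 3"
    using vec.dim_sums_Int[OF A0s A1s] dA0 dA1 dI unfolding H_def ssum_def by linarith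
  show False
  proof (cases "Y r0 \<subseteq> H")
    case True
    then have "C0 \<subseteq> H" using C0Y by blast
    then obtain w where w: "w \<noteq> 0" "w \<in> C0" "w \<in> Q0"
      using meet[OF C0s Q0s Hs _ Q0H] dC0 dQ0 dH by auto
    obtain x where x: "w = vA q0 x" using w(3) unfolding Q0_def by blast
    have "vA r0 (vA q0 x) \<in> K" using w(2) C0Y Ymem x by blast
    then have "x = 0" using N0 by blast
    then show False using w(1) x by simp
  next
    case False
    then obtain y where yY: "y \<in> Y r0" and yH: "y \<notin> H" by blast
    have ynz: "y \<noteq> 0" using yH Hs vec.subspace_0 by blast
    define Ly where "Ly = vec.span {vA r0 y}"
    define L5 where "L5 = ssum L Ly"
    have Lys: "vec.subspace Ly" unfolding Ly_def by simp
    have L5s: "vec.subspace L5" unfolding L5_def using ssum_sub Ls Lys by blast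
    have LyK: "Ly \<subseteq> K" unfolding Ly_def using vec.span_minimal K(1) yY Ymem by blast
    have L5K: "L5 \<subseteq> K" unfolding L5_def using ssum_le[OF K(1) LK LyK] .
    have Lymem: "\<exists>c. w = vA r0 (c *s y)" if "w \<in> Ly" for w
      using that unfolding Ly_def vec.span_singleton by (auto simp: vA_scale)
    have dLy: "vec.dim Ly = 1" unfolding Ly_def using line_dim vA_nz ynz r0nz by blast
    have "L \<inter> Ly \<subseteq> {0}"
    proof
      fix w assume w: "w \<in> L \<inter> Ly"
      obtain c where c: "w = vA r0 (c *s y)" using Lymem w by blast
      obtain u v where uv: "u \<in> A0" "v \<in> A1" "w = vA p0 u + vA p1 v" using Lmem w by blast
      have "vA r0 (c *s y) = vA p0 u + vA p1 v" using c uv(3) by simp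
      then have u: "u = a0 *s (c *s y)" using dec0 by blast
      show "w \<in> {0}"
      proof (cases "c = 0")
        case True then show ?thesis using c by simp
      next
        case False
        have "y = (1 / (a0 * c)) *s u" using u False a0nz by (simp add: vector_smult_assoc)
        moreover have "(1 / (a0 * c)) *s u \<in> A0" using vec.subspace_scale[OF A0s uv(1)] .
        ultimately have "y \<in> A0" by simp
        then show ?thesis using yH A0H by blast
      qed
    qed
    then have "vec.dim L5 = vec.dim L + vec.dim Ly" unfolding L5_def by (rule dim_ssum[OF Ls Lys])
    then have dL5: "vec.dim L5 = 5" using dL dLy by simp
    have L5eq: "L5 = K" using vec.subspace_dim_equal[OF L5s K(1) L5K] dL5 K(2) by simp
    have DA: "D \<subseteq> A0 \<inter> A1"
    proof
      fix d assume "d \<in> D"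
      then have "vA r1 d \<in> L5" using DY Ymem L5eq by blast
      then obtain l w where lw: "l \<in> L" "w \<in> Ly" "vA r1 d = l + w" unfolding L5_def ssum_def by blast
      obtain c where c: "w = vA r0 (c *s y)" using Lymem lw(2) by blast
      obtain u v where uv: "u \<in> A0" "v \<in> A1" "l = vA p0 u + vA p1 v" using Lmem lw(1) by blast
      have "vA r1 d = vA p0 (u + (a0 * c) *s y) + vA p1 (v + (b0 * c) *s y)"
      proof -
        have r0c: "r0 $ i = a0 * p0 $ i + b0 * p1 $ i" for i using hr0 by simp
        show ?thesis using lw(3) c uv(3) by (simp add: vec_eq_iff algebra_simps r0c)
      qed
      then have e0: "u + (a0 * c) *s y = a1 *s d \<and> v + (b0 * c) *s y = b1 *s d"
        by (rule dec1)
      then have e: "u + (a0 * c) *s y = a1 *s d" "v + (b0 * c) *s y = b1 *s d" by auto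
      have c0: "c = 0"
      proof (rule ccontr)
        assume cnz: "c \<noteq> 0"
        have "y = (1 / (c * (a0 * b1 - b0 * a1))) *s (a1 *s v - b1 *s u)"
        proof -
          have "y $ i = (1 / (c * (a0 * b1 - b0 * a1))) * (a1 * v $ i - b1 * u $ i)" for i
          proof -
            have e1: "u $ i + a0 * c * y $ i = a1 * d $ i" using arg_cong[OF e(1), of "\<lambda>v. v $ i"] by simp
            have e2: "v $ i + b0 * c * y $ i = b1 * d $ i" using arg_cong[OF e(2), of "\<lambda>v. v $ i"] by simp
            have u': "u $ i = a1 * d $ i - a0 * c * y $ i" using e1 by (simp add: eq_diff_eq)
            have v': "v $ i = b1 * d $ i - b0 * c * y $ i" using e2 by (simp add: eq_diff_eq)
            have "a1 * v $ i - b1 * u $ i = a1 * (b1 * d $ i - b0 * c * y $ i) - b1 * (a1 * d $ i - a0 * c * y $ i)"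
              unfolding u' v' ..
            also have "\<dots> = c * (a0 * b1 - b0 * a1) * y $ i" by (simp add: algebra_simps)
            finally have "a1 * v $ i - b1 * u $ i = c * (a0 * b1 - b0 * a1) * y $ i" .
            then show ?thesis using cnz cross by (simp add: field_simps)
          qed
          then show ?thesis by (simp add: vec_eq_iff diff_divide_distrib)
        qed
        moreover have "a1 *s v - b1 *s u \<in> H"
        proof -
          have "v \<in> H" "u \<in> H" using A0H A1H uv(1,2) by auto
          then show ?thesis using vec.subspace_diff[OF Hs] vec.subspace_scale[OF Hs] by blast
        qed
        ultimately have "y \<in> H" using vec.subspace_scale[OF Hs, of "a1 *s v - b1 *s u" "1 / (c * (a0 * b1 - b0 * a1))"] by (simp only:)
        then show False using yH by blast
      qed
      then have "d = (1/a1) *s u" "d = (1/b1) *s v" using e a1nz b1nz by (simp_all add: vector_smult_assoc)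
      moreover have "(1/a1) *s u \<in> A0" using vec.subspace_scale[OF A0s uv(1)] .
      moreover have "(1/b1) *s v \<in> A1" using vec.subspace_scale[OF A1s uv(2)] .
      ultimately show "d \<in> A0 \<inter> A1" by simp
    qed
    then have "D = A0" using vec.subspace_dim_equal[OF Ds A0s] dD dA0 by auto
    then have "vA q0 z0 \<in> Y r1" using a0A DY by blast
    then show False using N1 Z0(1) Ymem by blast
  qed
qed

definition vcnj :: "complex^'n \<Rightarrow> complex^'n" where "vcnj x = (\<chi> i. cnj (x $ i))"

lemma vcnj_nth[simp]: "vcnj x $ i = cnj (x $ i)" by (simp add: vcnj_def)

lemma sum_UNIV_prod: "sum f (UNIV :: ('a::finite \<times> 'b::finite) set) = (\<Sum>a\<in>UNIV. \<Sum>b\<in>UNIV. f (a,b))"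
  by (simp add: sum.cartesian_product UNIV_Times_UNIV[symmetric] del: UNIV_Times_UNIV)

lemma sigma_apply:
  fixes \<rho> :: "complex^(2\<times>2\<times>2)^(2\<times>2\<times>2)"
  assumes P: "\<And>i j. P$i$j = cP * cnj(\<pi>$i) * \<pi>$j" and Q: "\<And>i j. Q$i$j = cQ * cnj(\<kappa>$i) * \<kappa>$j"
  shows "(ptrace_AB (tensor_PQ1 P Q ** \<rho>) *v x) $ k =
     cP * cQ * (\<Sum>i'\<in>UNIV. \<Sum>j'\<in>UNIV. \<pi>$i' * \<kappa>$j' * (\<rho> *v vA (vcnj \<pi>) (vA (vcnj \<kappa>) x))$(i',j',k))"
  using exhaust_2[of k]
  unfolding ptrace_AB_def tensor_PQ1_def matrix_vector_mult_def matrix_matrix_mult_def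
  by (elim disjE) (simp_all add: sum_UNIV_prod sum_2 P Q algebra_simps)

lemma sumsq_real:
  fixes z :: "complex^'n"
  shows "(\<Sum>i\<in>UNIV. cnj (z$i) * z$i) = of_real (\<Sum>i\<in>UNIV. (norm (z$i))\<^sup>2)"
proof -
  have e: "cnj (z$i) * z$i = complex_of_real ((norm (z$i))\<^sup>2)" for i
    by (metis complex_norm_square mult.commute)
  have "(\<Sum>i\<in>UNIV. cnj (z$i) * z$i) = (\<Sum>i\<in>UNIV. complex_of_real ((norm (z$i))\<^sup>2))"
    using e by (rule sum.cong[OF refl])
  also have "\<dots> = of_real (\<Sum>i\<in>UNIV. (norm (z$i))\<^sup>2)" by (rule of_real_sum[symmetric])
  finally show ?thesis .
qed

lemma sumsq_zero:
  fixes z :: "complex^'n"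
  assumes "(\<Sum>i\<in>UNIV. cnj (z$i) * z$i) = 0" shows "z = 0"
proof -
  have "(\<Sum>i\<in>UNIV. cnj (z$i) * z$i) = of_real (\<Sum>i\<in>UNIV. (norm (z$i))\<^sup>2)"
    by (rule sumsq_real)
  then have "(\<Sum>i\<in>UNIV. (norm (z$i))\<^sup>2) = 0" using assms by (metis of_real_eq_0_iff)
  then have "\<forall>i\<in>UNIV. (norm (z$i))\<^sup>2 = 0" by (subst sum_nonneg_eq_0_iff[symmetric]) auto
  then show ?thesis by (simp add: vec_eq_iff)
qed

lemma mv_add_scale: "(\<rho> *v (w + t *s u)) $ i = (\<rho> *v w) $ i + t * (\<rho> *v u) $ i"
  for \<rho> :: "complex^'n^'m"
  by (simp add: matrix_vector_mult_def sum.distrib sum_distrib_left algebra_simps)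

lemma psd_zero:
  fixes \<rho> :: "complex^'n^'n"
  assumes psd: "psd \<rho>" and w0: "(\<Sum>i\<in>UNIV. cnj (w$i) * (\<rho> *v w)$i) = 0"
  shows "\<rho> *v w = 0"
proof -
  define G where "G v = (\<Sum>i\<in>UNIV. cnj (v$i) * (\<rho> *v v)$i)" for v
  have G_eq: "G v = (\<Sum>i\<in>UNIV. \<Sum>j\<in>UNIV. cnj (v $ i) * \<rho> $ i $ j * v $ j)" for v
    unfolding G_def matrix_vector_mult_def by (simp add: sum_distrib_left mult.assoc)
  have psdG: "\<exists>r. r \<ge> 0 \<and> G v = complex_of_real r" for v
    using psd unfolding psd_def G_eq by blast
  define u where "u = \<rho> *v w"
  define b where "b = (\<Sum>i\<in>UNIV. cnj (u$i) * (\<rho> *v w)$i)"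
  define c where "c = (\<Sum>i\<in>UNIV. cnj (w$i) * (\<rho> *v u)$i)"
  have exp: "G (w + t *s u) = G w + t * c + cnj t * b + cnj t * t * G u" for t
    unfolding G_def b_def c_def mv_add_scale
    by (simp add: algebra_simps sum.distrib sum_distrib_left)
  have Gw: "G w = 0" using w0 unfolding G_def .
  obtain f where f: "f \<ge> 0" "G u = complex_of_real f" using psdG by blast
  have bu: "b = (\<Sum>i\<in>UNIV. cnj (u$i) * u$i)" unfolding b_def u_def ..
  have breal: "b = complex_of_real (\<Sum>i\<in>UNIV. (norm (u$i))\<^sup>2)"
    unfolding bu by (rule sumsq_real)
  define B where "B = (\<Sum>i\<in>UNIV. (norm (u$i))\<^sup>2)"
  have B0: "B \<ge> 0" unfolding B_def by (simp add: sum_nonneg)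
  have bB: "b = complex_of_real B" using breal B_def by simp
  obtain r1 where r1: "G (w + 1 *s u) = complex_of_real r1" using psdG by blast
  obtain r2 where r2: "G (w + \<i> *s u) = complex_of_real r2" using psdG by blast
  have e1: "complex_of_real r1 = c + b + complex_of_real f" using r1 exp[of 1] Gw f(2) by simp
  have "Im (complex_of_real r1) = Im (c + b + complex_of_real f)" using e1 by (rule arg_cong)
  then have imc: "Im c = 0" using bB by simp
  have e2: "complex_of_real r2 = \<i> * c + cnj \<i> * b + cnj \<i> * \<i> * complex_of_real f"
    using r2 exp[of "\<i>"] Gw f(2) by simp
  have "Im (complex_of_real r2) = Im (\<i> * c + cnj \<i> * b + cnj \<i> * \<i> * complex_of_real f)"
    using e2 by (rule arg_cong)
  then have "Re c = B" using bB by simp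
  then have cb: "c = complex_of_real B" using imc by (simp add: complex_eq_iff)
  have "B = 0"
  proof (rule ccontr)
    assume "B \<noteq> 0"
    then have Bp: "B > 0" using B0 by simp
    define s where "s = B / (f + 1)"
    have sp: "s > 0" unfolding s_def using Bp f(1) by simp
    obtain r3 where r3: "G (w + complex_of_real (- s) *s u) = complex_of_real r3" "r3 \<ge> 0"
      using psdG by blast
    have e3: "complex_of_real r3 = complex_of_real (- s) * c + cnj (complex_of_real (- s)) * b
        + cnj (complex_of_real (- s)) * complex_of_real (- s) * complex_of_real f"
      using r3(1) exp[of "complex_of_real (- s)"] Gw f(2) by simp
    have "Re (complex_of_real r3) = Re (complex_of_real (- s) * c + cnj (complex_of_real (- s)) * b
        + cnj (complex_of_real (- s)) * complex_of_real (- s) * complex_of_real f)"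
      using e3 by (rule arg_cong)
    then have r3e: "r3 = - s * B - s * B + s * s * f" using cb bB by simp
    have "s * f < B"
    proof -
      have "s * f = B * f / (f + 1)" unfolding s_def by simp
      also have "\<dots> < B" using Bp f(1) by (simp add: field_simps)
      finally show ?thesis .
    qed
    then have "s * (s * f) < s * B" using sp by simp
    moreover have "s * B > 0" using sp Bp by simp
    ultimately have "r3 < 0" using r3e by (simp add: algebra_simps)
    then show False using r3(2) by simp
  qed
  then have "(\<Sum>i\<in>UNIV. cnj (u$i) * u$i) = 0" using bu bB by simp
  then show ?thesis using sumsq_zero u_def by blast
qed

lemma rows2: "rows (M::complex^2^2) = {M$1, M$2}"
proof -
  have ri: "row i M = M$i" for i by (simp add: row_def vec_lambda_eta)
  have "rows M = {M$i | i. i \<in> {1, 2::2}}" unfolding rows_def ri UNIV_2 ..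
  then show ?thesis by auto
qed

lemma d2_self: "d2 u u = 0" by (simp add: d2_def)

lemma rank_full: fixes M :: "complex^2^2" assumes "d2 (M$1) (M$2) \<noteq> 0" shows "rank M = 2"
proof -
  have ne: "M$1 \<noteq> M$2" using assms d2_self by metis
  have nz: "M$2 \<noteq> 0" using assms by (auto simp: d2_def)
  have nsp: "M$1 \<notin> vec.span {M$2}"
  proof
    assume "M$1 \<in> vec.span {M$2}"
    then obtain k where "M$1 = k *s M$2" unfolding vec.span_singleton by auto
    then have "d2 (M$1) (M$2) = 0" by (simp add: d2_def)
    then show False using assms by simp
  qed
  have ind: "vec.independent {M$1, M$2}"
    using ne nz nsp by (simp add: vec.independent_insert)
  have "rank M = vec.dim {M$1, M$2}" unfolding row_rank_def_gen rows2 ..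
  also have "\<dots> = card {M$1, M$2}" using vec.dim_eq_card_independent[OF ind] .
  also have "\<dots> = 2" using ne by simp
  finally show ?thesis .
qed

lemma rank_le1: fixes M :: "complex^2^2" assumes "M *v x = 0" "x \<noteq> 0" shows "rank M \<le> 1"
proof -
  define w :: "complex^2" where "w = (\<chi> i. if i = 1 then x$2 else - x$1)"
  have w1: "w$1 = x$2" and w2: "w$2 = - x$1" unfolding w_def by simp_all
  have wnz: "w \<noteq> 0"
  proof
    assume "w = 0"
    then have "x$1 = 0" "x$2 = 0" using w1 w2 by (auto simp: vec_eq_iff)
    then have "x = 0" by (simp add: vec_eq_iff forall_2)
    then show False using assms(2) by simp
  qed
  have "r \<in> vec.span {w}" if "r \<in> rows M" for r
  proof -
    have "r \<in> {M$1, M$2}" using that unfolding rows2 .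
    then obtain i where r: "r = M$i" by auto
    have "(M *v x) $ i = 0" using assms(1) by simp
    then have h: "r$1 * x$1 + r$2 * x$2 = 0" unfolding r by (simp add: matrix_vector_mult_def sum_2)
    have "d2 r w = - (r$1 * x$1 + r$2 * x$2)" by (simp add: d2_def w1 w2 algebra_simps)
    then have "d2 r w = 0" using h by simp
    then obtain l where "r = l *s w" using par wnz by blast
    then show ?thesis unfolding vec.span_singleton by auto
  qed
  then have "rows M \<subseteq> vec.span {w}" by blast
  then have "vec.dim (rows M) \<le> card {w}" using vec.dim_le_card by blast
  then show ?thesis unfolding row_rank_def_gen by simp
qed

lemma rank2_inj: fixes M :: "complex^2^2" assumes "rank M = 2" "M *v x = 0" shows "x = 0"
  using rank_le1[OF assms(2)] assms(1) by fastforce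

lemma rank0: fixes M :: "complex^2^2" shows "rank M = 1 \<Longrightarrow> M \<noteq> 0"
proof
  assume "rank M = 1" "M = 0"
  then have "rows M = {0}" using rows2 by simp
  then have "rank M = 0" unfolding row_rank_def_gen by simp
  then show False using \<open>rank M = 1\<close> by simp
qed

lemma rank1_d2: fixes M :: "complex^2^2" shows "rank M = 1 \<Longrightarrow> d2 (M$1) (M$2) = 0"
  using rank_full by fastforce

lemma rank1_ker: fixes M :: "complex^2^2" assumes "rank M = 1" shows "\<exists>x. x \<noteq> 0 \<and> M *v x = 0"
proof -
  have d: "d2 (M$1) (M$2) = 0" using rank1_d2 assms .
  have "M \<noteq> 0" using rank0 assms .
  then have "M$1 \<noteq> 0 \<or> M$2 \<noteq> 0" by (auto simp: vec_eq_iff forall_2)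
  then show ?thesis
  proof
    assume h: "M$1 \<noteq> 0"
    define x :: "complex^2" where "x = (\<chi> i. if i = 1 then M$1$2 else - M$1$1)"
    have x1: "x$1 = M$1$2" and x2: "x$2 = - M$1$1" unfolding x_def by simp_all
    have "x \<noteq> 0"
    proof
      assume "x = 0"
      then have "M$1$1 = 0" "M$1$2 = 0" using x1 x2 by (auto simp: vec_eq_iff)
      then show False using h by (simp add: vec_eq_iff forall_2)
    qed
    moreover have "M *v x = 0"
      using d by (simp add: vec_eq_iff forall_2 matrix_vector_mult_def sum_2 x1 x2 d2_def algebra_simps)
    ultimately show ?thesis by blast
  next
    assume h: "M$2 \<noteq> 0"
    define x :: "complex^2" where "x = (\<chi> i. if i = 1 then M$2$2 else - M$2$1)"
    have x1: "x$1 = M$2$2" and x2: "x$2 = - M$2$1" unfolding x_def by simp_all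
    have "x \<noteq> 0"
    proof
      assume "x = 0"
      then have "M$2$1 = 0" "M$2$2 = 0" using x1 x2 by (auto simp: vec_eq_iff)
      then show False using h by (simp add: vec_eq_iff forall_2)
    qed
    moreover have "M *v x = 0"
      using d by (simp add: vec_eq_iff forall_2 matrix_vector_mult_def sum_2 x1 x2 d2_def algebra_simps)
    ultimately show ?thesis by blast
  qed
qed

lemma herm: assumes "cadj R = R" shows "R$i$j = cnj (R$j$i)"
proof -
  have "(cadj R)$i$j = R$i$j" using assms by simp
  then show ?thesis unfolding cadj_def by simp
qed

lemma minor1:
  fixes R :: "complex^2^2"
  assumes d': "R$1$1 * R$2$2 = R$1$2 * R$2$1"
  shows "R$i$j * R$1$1 = R$i$1 * R$1$j"
proof (cases "i = 1")
  case True
  show ?thesis unfolding True by (rule mult.commute)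
next
  case False
  then have i: "i = 2" using exhaust_2 by blast
  show ?thesis
  proof (cases "j = 1")
    case True
    show ?thesis unfolding True ..
  next
    case False
    then have j: "j = 2" using exhaust_2 by blast
    show ?thesis unfolding i j using d' by (simp only: mult.commute)
  qed
qed

lemma rep:
  fixes R :: "complex^2^2"
  assumes h: "cadj R = R" and nz: "R \<noteq> 0" and d: "d2 (R$1) (R$2) = 0"
  shows "\<exists>\<pi> c. \<pi> \<noteq> 0 \<and> c \<noteq> 0 \<and> (\<forall>i j. R$i$j = c * cnj (\<pi>$i) * \<pi>$j)"
proof -
  have d': "R$1$1 * R$2$2 = R$1$2 * R$2$1" using d by (simp add: d2_def)
  have hc: "cnj (R$i$j) = R$j$i" for i j using herm[OF h, of j i] by simp
  show ?thesis
  proof (cases "R$1$1 = 0")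
    case False
    have "R$i$j = (1 / R$1$1) * cnj (R$1$i) * R$1$j" for i j
    proof -
      have "R$i$j * R$1$1 = R$i$1 * R$1$j" by (rule minor1[OF d'])
      then have "R$i$j = R$i$1 * R$1$j / R$1$1" using False by (simp add: eq_divide_eq)
      then show ?thesis using hc[of 1 i] by simp
    qed
    moreover have "R$1 \<noteq> 0" using False by auto
    moreover have "1 / R$1$1 \<noteq> 0" using False by simp
    ultimately show ?thesis by blast
  next
    case True
    have "R$1$2 * R$2$1 = 0" using d' True by simp
    moreover have "R$2$1 = cnj (R$1$2)" using hc[of 1 2] by simp
    ultimately have "R$1$2 * cnj (R$1$2) = 0" by simp
    then have r12: "R$1$2 = 0" by simp
    then have r21: "R$2$1 = 0" using hc[of 1 2] by simp
    have r22: "R$2$2 \<noteq> 0"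
    proof
      assume "R$2$2 = 0"
      then have "R = 0" using True r12 r21 by (simp add: vec_eq_iff forall_2)
      then show False using nz by simp
    qed
    have "R$i$j = (1 / R$2$2) * cnj (R$2$i) * R$2$j" for i j
    proof -
      have "R$i$j * R$2$2 = R$i$2 * R$2$j"
      proof (cases "i = 2 \<and> j = 2")
        case True then show ?thesis by simp
      next
        case False
        then have "R$i$j = 0" using exhaust_2[of i] exhaust_2[of j] \<open>R$1$1 = 0\<close> r12 r21 by auto
        moreover have "R$i$2 * R$2$j = 0" using False exhaust_2[of i] exhaust_2[of j] r12 r21 by auto
        ultimately show ?thesis by simp
      qed
      then have "R$i$j = R$i$2 * R$2$j / R$2$2" using r22 by (simp add: eq_divide_eq)
      then show ?thesis using hc[of 2 i] by simp
    qed
    moreover have "R$2 \<noteq> 0" using r22 by auto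
    moreover have "1 / R$2$2 \<noteq> 0" using r22 by simp
    ultimately show ?thesis by blast
  qed
qed


lemma proj_eq:
  fixes R R' :: "complex^2^2"
  assumes o: "R ** R = R" "R' ** R' = R'" and nz: "R \<noteq> 0" "R' \<noteq> 0"
    and r: "\<And>i j. R$i$j = c * cnj (\<pi>$i) * \<pi>$j" and r': "\<And>i j. R'$i$j = c' * cnj (\<pi>'$i) * \<pi>'$j"
    and c: "c \<noteq> 0" and p: "\<pi> \<noteq> 0" and d: "d2 \<pi>' \<pi> = 0"
  shows "R' = R"
proof -
  obtain l where l: "\<pi>' = l *s \<pi>" using par[OF d p] by blast
  define \<mu> where "\<mu> = c' * cnj l * l / c"
  have e: "R'$i$j = \<mu> * R$i$j" for i j
    unfolding \<mu>_def r r' l using c by (simp add: field_simps)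
  have "(R' ** R')$i$j = \<mu> * \<mu> * (R ** R)$i$j" for i j
    by (simp add: matrix_matrix_mult_def sum_2 e algebra_simps)
  then have e2: "\<mu> * R$i$j = \<mu> * \<mu> * R$i$j" for i j using o e by simp
  obtain i j where ij: "R$i$j \<noteq> 0" using nz(1) by (auto simp: vec_eq_iff)
  have "(\<mu> - \<mu> * \<mu>) * R$i$j = 0" using e2[of i j] by (simp add: algebra_simps)
  then have "\<mu> * (1 - \<mu>) = 0" using ij by (simp add: algebra_simps)
  then have "\<mu> = 0 \<or> \<mu> = 1" by simp
  moreover have "\<mu> \<noteq> 0"
  proof
    assume "\<mu> = 0"
    then have "R' = 0" using e by (simp add: vec_eq_iff)
    then show False using nz(2) by simp
  qed
  ultimately have "\<mu> = 1" by simp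
  then show ?thesis using e by (simp add: vec_eq_iff)
qed

definition Kset :: "complex^'n^'n \<Rightarrow> (complex^'n) set" where
  "Kset \<rho> = {u. \<forall>i. (\<Sum>j\<in>UNIV. cnj (\<rho>$i$j) * u$j) = 0}"

lemma K_sub: "vec.subspace (Kset \<rho>)"
proof -
  have a: "(\<Sum>j\<in>UNIV. cnj (\<rho>$i$j) * (x + y)$j) = (\<Sum>j\<in>UNIV. cnj (\<rho>$i$j) * x$j) + (\<Sum>j\<in>UNIV. cnj (\<rho>$i$j) * y$j)"
    for x y :: "complex^'a" and i by (simp add: distrib_left sum.distrib)
  have s: "(\<Sum>j\<in>UNIV. cnj (\<rho>$i$j) * (c *s x)$j) = c * (\<Sum>j\<in>UNIV. cnj (\<rho>$i$j) * x$j)"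
    for x :: "complex^'a" and c i by (simp add: sum_distrib_left algebra_simps)
  show ?thesis unfolding vec.subspace_def Kset_def using a s by simp
qed

lemma dimK:
  fixes \<rho> :: "complex^(2\<times>2\<times>2)^(2\<times>2\<times>2)"
  assumes "rank \<rho> = 3"
  shows "vec.dim (Kset \<rho>) \<le> 5"
proof -
  define S where "S = vec.span (rows \<rho>)"
  have Ss: "vec.subspace S" unfolding S_def by simp
  have dS: "vec.dim S = 3" unfolding S_def using assms unfolding row_rank_def_gen by simp
  have "S \<inter> Kset \<rho> \<subseteq> {0}"
  proof
    fix x assume x: "x \<in> S \<inter> Kset \<rho>"
    have sa: "(\<Sum>j\<in>UNIV. cnj ((a + b)$j) * x$j) = (\<Sum>j\<in>UNIV. cnj (a$j) * x$j) + (\<Sum>j\<in>UNIV. cnj (b$j) * x$j)"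
      for a b :: "complex^(2\<times>2\<times>2)" by (simp add: distrib_right sum.distrib)
    have ss: "(\<Sum>j\<in>UNIV. cnj ((c *s a)$j) * x$j) = cnj c * (\<Sum>j\<in>UNIV. cnj (a$j) * x$j)"
      for a :: "complex^(2\<times>2\<times>2)" and c by (simp add: sum_distrib_left algebra_simps)
    have sub: "vec.subspace {y. (\<Sum>j\<in>UNIV. cnj (y$j) * x$j) = 0}"
      unfolding vec.subspace_def using sa ss by simp
    have base: "(\<Sum>j\<in>UNIV. cnj (y$j) * x$j) = 0" if yr: "y \<in> rows \<rho>" for y
    proof -
      obtain i where yi: "y = row i \<rho>" using yr unfolding rows_def by blast
      have "\<forall>i. (\<Sum>j\<in>UNIV. cnj (\<rho>$i$j) * x$j) = 0" using x unfolding Kset_def by blast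
      then have "(\<Sum>j\<in>UNIV. cnj (\<rho>$i$j) * x$j) = 0" by blast
      moreover have "y $ j = \<rho>$i$j" for j unfolding yi row_def by simp
      ultimately show ?thesis by simp
    qed
    have "(\<Sum>j\<in>UNIV. cnj (y$j) * x$j) = 0" if "y \<in> S" for y
      using vec.span_induct[of y "rows \<rho>" "\<lambda>y. (\<Sum>j\<in>UNIV. cnj (y$j) * x$j) = 0"] that sub base
      unfolding S_def by simp
    then have "(\<Sum>j\<in>UNIV. cnj (x$j) * x$j) = 0" using x by blast
    then show "x \<in> {0}" using sumsq_zero by blast
  qed
  then have z: "vec.dim (S \<inter> Kset \<rho>) = 0" using vec.dim_eq_0 by blast
  have "vec.dim {x + y |x y. x \<in> S \<and> y \<in> Kset \<rho>} \<le> CARD(2\<times>2\<times>2)"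
    by (rule dim_subset_UNIV_cart_gen)
  then have "vec.dim {x + y |x y. x \<in> S \<and> y \<in> Kset \<rho>} \<le> 8" by simp
  then show ?thesis using vec.dim_sums_Int[OF Ss K_sub[of \<rho>]] z dS by linarith
qed

lemma form_id:
  fixes R :: "complex^(2\<times>2\<times>2)"
  shows "(\<Sum>k\<in>UNIV. cnj (x$k) * (\<Sum>i'\<in>UNIV. \<Sum>j'\<in>UNIV. \<pi>$i' * \<kappa>$j' * R$(i',j',k)))
       = (\<Sum>u\<in>UNIV. cnj ((vA (vcnj \<pi>) (vA (vcnj \<kappa>) x))$u) * R$u)"
  by (simp add: sum_UNIV_prod sum_2 algebra_simps)

lemma ker_char:
  fixes \<rho> :: "complex^(2\<times>2\<times>2)^(2\<times>2\<times>2)"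
  assumes psd: "psd \<rho>"
    and P: "\<And>i j. P$i$j = cP * cnj(\<pi>$i) * \<pi>$j" and Q: "\<And>i j. Q$i$j = cQ * cnj(\<kappa>$i) * \<kappa>$j"
    and cP: "cP \<noteq> 0" and cQ: "cQ \<noteq> 0"
  shows "(ptrace_AB (tensor_PQ1 P Q ** \<rho>) *v x = 0) \<longleftrightarrow> vA \<pi> (vA \<kappa> (vcnj x)) \<in> Kset \<rho>"
proof -
  define N where "N = vA (vcnj \<pi>) (vA (vcnj \<kappa>) x)"
  define \<sigma> where "\<sigma> = ptrace_AB (tensor_PQ1 P Q ** \<rho>)"
  have sa: "(\<sigma> *v x) $ k = cP * cQ * (\<Sum>i'\<in>UNIV. \<Sum>j'\<in>UNIV. \<pi>$i' * \<kappa>$j' * (\<rho> *v N)$(i',j',k))" for k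
    unfolding \<sigma>_def N_def by (rule sigma_apply[OF P Q])
  have hN: "vcnj N = vA \<pi> (vA \<kappa> (vcnj x))"
    unfolding N_def by (simp add: vec_eq_iff)
  have cj: "(\<Sum>j\<in>UNIV. cnj (\<rho>$i$j) * cnj (N$j)) = cnj ((\<rho> *v N)$i)" for i
    by (simp add: matrix_vector_mult_def)
  have hK: "(\<rho> *v N = 0) \<longleftrightarrow> vcnj N \<in> Kset \<rho>"
  proof -
    have "vcnj N \<in> Kset \<rho> \<longleftrightarrow> (\<forall>i. cnj ((\<rho> *v N)$i) = 0)" unfolding Kset_def mem_Collect_eq vcnj_nth cj ..
    also have "\<dots> \<longleftrightarrow> (\<forall>i. (\<rho> *v N)$i = 0)" by (simp only: complex_cnj_zero_iff)
    also have "\<dots> \<longleftrightarrow> \<rho> *v N = 0" by (simp only: vec_eq_iff zero_index)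
    finally show ?thesis by simp
  qed
  show ?thesis
  proof
    assume s0: "ptrace_AB (tensor_PQ1 P Q ** \<rho>) *v x = 0"
    have "(\<Sum>k\<in>UNIV. cnj (x$k) * (\<sigma> *v x) $ k) = 0" using s0 unfolding \<sigma>_def by simp
    then have "(\<Sum>k\<in>UNIV. cnj (x$k) * (cP * cQ * (\<Sum>i'\<in>UNIV. \<Sum>j'\<in>UNIV. \<pi>$i' * \<kappa>$j' * (\<rho> *v N)$(i',j',k)))) = 0"
      unfolding sa .
    then have "cP * cQ * (\<Sum>k\<in>UNIV. cnj (x$k) * (\<Sum>i'\<in>UNIV. \<Sum>j'\<in>UNIV. \<pi>$i' * \<kappa>$j' * (\<rho> *v N)$(i',j',k))) = 0"
      by (simp add: sum_distrib_left algebra_simps)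
    then have "(\<Sum>k\<in>UNIV. cnj (x$k) * (\<Sum>i'\<in>UNIV. \<Sum>j'\<in>UNIV. \<pi>$i' * \<kappa>$j' * (\<rho> *v N)$(i',j',k))) = 0"
      using cP cQ by simp
    then have "(\<Sum>u\<in>UNIV. cnj (N$u) * (\<rho> *v N)$u) = 0" unfolding form_id N_def .
    then have "\<rho> *v N = 0" using psd_zero[OF psd] by blast
    then show "vA \<pi> (vA \<kappa> (vcnj x)) \<in> Kset \<rho>" using hK hN by simp
  next
    assume "vA \<pi> (vA \<kappa> (vcnj x)) \<in> Kset \<rho>"
    then have "\<rho> *v N = 0" using hK hN by simp
    then have "(\<sigma> *v x) $ k = 0" for k using sa by simp
    then show "ptrace_AB (tensor_PQ1 P Q ** \<rho>) *v x = 0" unfolding \<sigma>_def by (simp add: vec_eq_iff)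
  qed
qed

lemma r1p_facts:
  fixes R :: "complex^2^2"
  assumes "rank_one_proj R"
  shows "R ** R = R" "cadj R = R" "R \<noteq> 0" "d2 (R$1) (R$2) = 0"
  using assms rank0 rank1_d2 unfolding rank_one_proj_def orth_proj_def by auto

lemma r1p_rep:
  fixes R :: "complex^2^2"
  assumes "rank_one_proj R"
  shows "\<exists>\<pi> c. \<pi> \<noteq> 0 \<and> c \<noteq> 0 \<and> (\<forall>i j. R$i$j = c * cnj (\<pi>$i) * \<pi>$j)"
  using rep r1p_facts[OF assms] by blast

lemma proj_neq:
  assumes "rank_one_proj R" "rank_one_proj R'" "R \<noteq> R'"
    and r: "\<And>i j. R$i$j = c * cnj (\<pi>$i) * \<pi>$j" and r': "\<And>i j. R'$i$j = c' * cnj (\<pi>'$i) * \<pi>'$j"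
    and c: "c \<noteq> 0" and p: "\<pi> \<noteq> 0"
  shows "d2 \<pi> \<pi>' \<noteq> 0"
proof
  assume "d2 \<pi> \<pi>' = 0"
  then have "d2 \<pi>' \<pi> = 0" using d2_comm by (metis neg_equal_0_iff_equal)
  then have "R' = R" using proj_eq[OF r1p_facts(1)[OF assms(1)] r1p_facts(1)[OF assms(2)]
      r1p_facts(3)[OF assms(1)] r1p_facts(3)[OF assms(2)] r r' c p] by blast
  then show False using assms(3) by simp
qed

lemma pm_neq: assumes "nontrivial_pm R0 R1" shows "R0 \<noteq> R1"
proof
  assume eq: "R0 = R1"
  have s: "R0 + R0 = mat 1" using assms eq unfolding nontrivial_pm_def by simp
  have e11: "R0$1$1 + R0$1$1 = 1" using arg_cong[OF s, of "\<lambda>M. M$1$1"] by (simp add: mat_def)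
  have e12: "R0$1$2 + R0$1$2 = 0" using arg_cong[OF s, of "\<lambda>M. M$1$2"] by (simp add: mat_def)
  have e21: "R0$2$1 + R0$2$1 = 0" using arg_cong[OF s, of "\<lambda>M. M$2$1"] by (simp add: mat_def)
  have idem: "R0 ** R0 = R0" using assms unfolding nontrivial_pm_def rank_one_proj_def orth_proj_def by simp
  have "(R0 ** R0)$1$1 = R0$1$1 * R0$1$1 + R0$1$2 * R0$2$1" by (simp add: matrix_matrix_mult_def sum_2)
  then have "R0$1$1 = R0$1$1 * R0$1$1" using idem e12 by simp
  moreover have "R0$1$1 = 1/2" using e11 by (simp add: field_simps)
  ultimately show False by simp
qed

lemma k1:
  fixes \<rho> :: "complex^(2\<times>2\<times>2)^(2\<times>2\<times>2)"
  assumes psd: "psd \<rho>"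
    and P: "\<And>i j. P$i$j = cP * cnj(\<pi>$i) * \<pi>$j" and Q: "\<And>i j. Q$i$j = cQ * cnj(\<kappa>$i) * \<kappa>$j"
    and cP: "cP \<noteq> 0" and cQ: "cQ \<noteq> 0"
    and r: "rank (ptrace_AB (tensor_PQ1 P Q ** \<rho>)) = 1"
  shows "\<exists>y. y \<noteq> 0 \<and> vA \<pi> (vA \<kappa> y) \<in> Kset \<rho>"
proof -
  obtain x where x: "x \<noteq> 0" "ptrace_AB (tensor_PQ1 P Q ** \<rho>) *v x = 0" using rank1_ker[OF r] by blast
  have "vA \<pi> (vA \<kappa> (vcnj x)) \<in> Kset \<rho>" using ker_char[OF psd P Q cP cQ] x(2) by blast
  moreover have "vcnj x \<noteq> 0" using x(1) by (auto simp: vec_eq_iff)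
  ultimately show ?thesis by blast
qed

lemma k2:
  fixes \<rho> :: "complex^(2\<times>2\<times>2)^(2\<times>2\<times>2)"
  assumes psd: "psd \<rho>"
    and P: "\<And>i j. P$i$j = cP * cnj(\<pi>$i) * \<pi>$j" and Q: "\<And>i j. Q$i$j = cQ * cnj(\<kappa>$i) * \<kappa>$j"
    and cP: "cP \<noteq> 0" and cQ: "cQ \<noteq> 0"
    and r: "rank (ptrace_AB (tensor_PQ1 P Q ** \<rho>)) = 2"
    and y: "vA \<pi> (vA \<kappa> y) \<in> Kset \<rho>"
  shows "y = 0"
proof -
  have vv: "vcnj (vcnj y) = y" by (simp add: vec_eq_iff)
  have "ptrace_AB (tensor_PQ1 P Q ** \<rho>) *v (vcnj y) = 0" using ker_char[OF psd P Q cP cQ, of "vcnj y"] y vv by simp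
  then have "vcnj y = 0" using rank2_inj[OF r] by blast
  then show ?thesis by (simp add: vec_eq_iff)
qed

theorem lemma7:
  fixes \<rho> :: "complex^(2\<times>2\<times>2)^(2\<times>2\<times>2)"
    and P Q :: "nat \<Rightarrow> nat \<Rightarrow> complex^2^2"
  assumes "density_op \<rho>"
    and "rank \<rho> = 3"
    and "\<forall>x<2. nontrivial_pm (P 0 x) (P 1 x)"
    and "\<forall>y<2. nontrivial_pm (Q 0 y) (Q 1 y)"
    and "Q 0 0 \<noteq> Q 0 1" and "Q 0 0 \<noteq> Q 1 1"
  shows "\<not> (\<forall>a<2. \<forall>b<2.
              rank (assemblage \<rho> P Q a b 0 0) = 1 \<and> rank (assemblage \<rho> P Q a b 1 1) = 1 \<and>
              rank (assemblage \<rho> P Q a b 0 1) = 2 \<and> rank (assemblage \<rho> P Q a b 1 0) = 2)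
       \<and> \<not> (\<forall>a<2. \<forall>y<2.
              rank (assemblage \<rho> P Q a 0 0 y) = 1 \<and> rank (assemblage \<rho> P Q a 1 0 y) = 2 \<and>
              rank (assemblage \<rho> P Q a 0 1 y) = 2 \<and> rank (assemblage \<rho> P Q a 1 1 y) = 1)"
proof -
  have psd: "psd \<rho>" using assms(1) unfolding density_op_def by simp
  define K where "K = Kset \<rho>"
  have Ks: "vec.subspace K" unfolding K_def by (rule K_sub)
  have Kd: "vec.dim K \<le> 5" unfolding K_def using dimK assms(2) by blast
  have Pr: "rank_one_proj (P a x)" if "a < 2" "x < 2" for a x
  proof -
    have "a = 0 \<or> a = 1" using that by auto
    then show ?thesis using assms(3) that unfolding nontrivial_pm_def by auto
  qed
  have Qr: "rank_one_proj (Q b y)" if "b < 2" "y < 2" for b y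
  proof -
    have "b = 0 \<or> b = 1" using that by auto
    then show ?thesis using assms(4) that unfolding nontrivial_pm_def by auto
  qed
  have exP: "\<exists>\<pi> c. \<pi> \<noteq> 0 \<and> c \<noteq> 0 \<and> (\<forall>i j. P a x $i$j = c * cnj(\<pi>$i) * \<pi>$j)"
    if "a < 2" "x < 2" for a x using r1p_rep[OF Pr[OF that]] .
  have exQ: "\<exists>\<pi> c. \<pi> \<noteq> 0 \<and> c \<noteq> 0 \<and> (\<forall>i j. Q a x $i$j = c * cnj(\<pi>$i) * \<pi>$j)"
    if "a < 2" "x < 2" for a x using r1p_rep[OF Qr[OF that]] .
  define pi where "pi a x = (SOME \<pi>. \<exists>c. \<pi> \<noteq> 0 \<and> c \<noteq> 0 \<and> (\<forall>i j. P a x $i$j = c * cnj(\<pi>$i) * \<pi>$j))" for a x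
  define cp where "cp a x = (SOME c. pi a x \<noteq> 0 \<and> c \<noteq> 0 \<and> (\<forall>i j. P a x $i$j = c * cnj(pi a x $i) * pi a x $j))" for a x
  define ki where "ki a x = (SOME \<pi>. \<exists>c. \<pi> \<noteq> 0 \<and> c \<noteq> 0 \<and> (\<forall>i j. Q a x $i$j = c * cnj(\<pi>$i) * \<pi>$j))" for a x
  define cq where "cq a x = (SOME c. ki a x \<noteq> 0 \<and> c \<noteq> 0 \<and> (\<forall>i j. Q a x $i$j = c * cnj(ki a x $i) * ki a x $j))" for a x
  have piP: "pi a x \<noteq> 0 \<and> cp a x \<noteq> 0 \<and> (\<forall>i j. P a x $i$j = cp a x * cnj(pi a x $i) * pi a x $j)"
    if "a < 2" "x < 2" for a x
  proof -
    have "\<exists>c. pi a x \<noteq> 0 \<and> c \<noteq> 0 \<and> (\<forall>i j. P a x $i$j = c * cnj(pi a x $i) * pi a x $j)"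
      unfolding pi_def by (rule someI_ex) (rule exP[OF that])
    then show ?thesis unfolding cp_def by (rule someI_ex)
  qed
  have kiQ: "ki a x \<noteq> 0 \<and> cq a x \<noteq> 0 \<and> (\<forall>i j. Q a x $i$j = cq a x * cnj(ki a x $i) * ki a x $j)"
    if "a < 2" "x < 2" for a x
  proof -
    have "\<exists>c. ki a x \<noteq> 0 \<and> c \<noteq> 0 \<and> (\<forall>i j. Q a x $i$j = c * cnj(ki a x $i) * ki a x $j)"
      unfolding ki_def by (rule someI_ex) (rule exQ[OF that])
    then show ?thesis unfolding cq_def by (rule someI_ex)
  qed
  have K1: "\<exists>z. z \<noteq> 0 \<and> vA (pi a x) (vA (ki b y) z) \<in> K"
    if "rank (assemblage \<rho> P Q a b x y) = 1" "a < 2" "b < 2" "x < 2" "y < 2" for a b x y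
  proof -
    have p: "\<And>i j. P a x $i$j = cp a x * cnj(pi a x $i) * pi a x $j" "cp a x \<noteq> 0"
      using piP[OF that(2,4)] by auto
    have q: "\<And>i j. Q b y $i$j = cq b y * cnj(ki b y $i) * ki b y $j" "cq b y \<noteq> 0"
      using kiQ[OF that(3,5)] by auto
    show ?thesis using k1[OF psd p(1) q(1) p(2) q(2)] that(1) unfolding assemblage_def K_def by blast
  qed
  have K2: "z = 0"
    if "rank (assemblage \<rho> P Q a b x y) = 2" "a < 2" "b < 2" "x < 2" "y < 2"
       "vA (pi a x) (vA (ki b y) z) \<in> K" for a b x y z
  proof -
    have p: "\<And>i j. P a x $i$j = cp a x * cnj(pi a x $i) * pi a x $j" "cp a x \<noteq> 0"
      using piP[OF that(2,4)] by auto
    have q: "\<And>i j. Q b y $i$j = cq b y * cnj(ki b y $i) * ki b y $j" "cq b y \<noteq> 0"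
      using kiQ[OF that(3,5)] by auto
    show ?thesis using k2[OF psd p(1) q(1) p(2) q(2)] that(1,6) unfolding assemblage_def K_def by blast
  qed
  have dP: "d2 (pi 0 x) (pi 1 x) \<noteq> 0" if "x < 2" for x
  proof -
    have ne: "P 0 x \<noteq> P 1 x" using pm_neq assms(3) that by blast
    have pr0: "rank_one_proj (P 0 x)" and pr1: "rank_one_proj (P 1 x)" using Pr that by auto
    have r: "\<And>i j. P 0 x $i$j = cp 0 x * cnj(pi 0 x $i) * pi 0 x $j" and c: "cp 0 x \<noteq> 0" and p: "pi 0 x \<noteq> 0"
      using piP[of 0 x] that by auto
    have r': "\<And>i j. P 1 x $i$j = cp 1 x * cnj(pi 1 x $i) * pi 1 x $j"
      using piP[of 1 x] that by auto
    show ?thesis by (rule proj_neq[OF pr0 pr1 ne r r' c p])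
  qed
  have dQg: "d2 (ki a x) (ki b y) \<noteq> 0" if ne: "Q a x \<noteq> Q b y" and "a < 2" "x < 2" "b < 2" "y < 2" for a x b y
  proof -
    have pr0: "rank_one_proj (Q a x)" and pr1: "rank_one_proj (Q b y)" using Qr that by auto
    have r: "\<And>i j. Q a x $i$j = cq a x * cnj(ki a x $i) * ki a x $j" and c: "cq a x \<noteq> 0" and p: "ki a x \<noteq> 0"
      using kiQ[of a x] that by auto
    have r': "\<And>i j. Q b y $i$j = cq b y * cnj(ki b y $i) * ki b y $j"
      using kiQ[of b y] that by auto
    show ?thesis by (rule proj_neq[OF pr0 pr1 ne r r' c p])
  qed
  have dQ: "d2 (ki 0 y) (ki 1 y) \<noteq> 0" if "y < 2" for y
    using dQg[of 0 y 1 y] pm_neq assms(4) that by simp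
  have Q1: "Q 1 0 \<noteq> Q 1 1"
  proof
    assume e: "Q 1 0 = Q 1 1"
    have "Q 0 0 + Q 1 0 = mat 1" "Q 0 1 + Q 1 1 = mat 1" using assms(4) unfolding nontrivial_pm_def by auto
    then have "Q 0 0 = Q 0 1" using e by (metis add_right_cancel)
    then show False using assms(5) by simp
  qed
  have pat1: False if H: "\<forall>a<2. \<forall>b<2.
              rank (assemblage \<rho> P Q a b 0 0) = 1 \<and> rank (assemblage \<rho> P Q a b 1 1) = 1 \<and>
              rank (assemblage \<rho> P Q a b 0 1) = 2 \<and> rank (assemblage \<rho> P Q a b 1 0) = 2"
  proof -
    obtain z0 where z0: "z0 \<noteq> 0" "vA (pi 0 0) (vA (ki 0 0) z0) \<in> K" using K1[of 0 0 0 0] H by auto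
    obtain w0 where w0: "w0 \<noteq> 0" "vA (pi 0 0) (vA (ki 1 0) w0) \<in> K" using K1[of 0 1 0 0] H by auto
    obtain z1 where z1: "z1 \<noteq> 0" "vA (pi 1 0) (vA (ki 0 0) z1) \<in> K" using K1[of 1 0 0 0] H by auto
    obtain w1 where w1: "w1 \<noteq> 0" "vA (pi 1 0) (vA (ki 1 0) w1) \<in> K" using K1[of 1 1 0 0] H by auto
    obtain u0 where u0: "u0 \<noteq> 0" "vA (pi 0 1) (vA (ki 0 1) u0) \<in> K" using K1[of 0 0 1 1] H by auto
    obtain u0' where u0': "u0' \<noteq> 0" "vA (pi 0 1) (vA (ki 1 1) u0') \<in> K" using K1[of 0 1 1 1] H by auto
    obtain v1 where v1: "v1 \<noteq> 0" "vA (pi 1 1) (vA (ki 0 1) v1) \<in> K" using K1[of 1 0 1 1] H by auto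
    obtain v1' where v1': "v1' \<noteq> 0" "vA (pi 1 1) (vA (ki 1 1) v1') \<in> K" using K1[of 1 1 1 1] H by auto
    have N0: "x = 0" if "vA (pi 0 1) (vA (ki 0 0) x) \<in> K" for x using K2[of 0 0 1 0 x] H that by auto
    have N1: "x = 0" if "vA (pi 1 1) (vA (ki 0 0) x) \<in> K" for x using K2[of 1 0 1 0 x] H that by auto
    have d0: "d2 (ki 0 0) (ki 1 0) \<noteq> 0" using dQ[of 0] by simp
    have d1: "d2 (ki 0 1) (ki 1 1) \<noteq> 0" using dQ[of 1] by simp
    show False
      using core[OF Ks Kd dP[of 0] dP[of 1] z0(1) z0(2) d0 w0(1) w0(2) z1(1) z1(2) d0 w1(1) w1(2)
          d1 u0(1) u0'(1) u0(2) u0'(2) d1 v1(1) v1'(1) v1(2) v1'(2) N0 N1] by simp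
  qed
  have pat2: False if H: "\<forall>a<2. \<forall>y<2.
              rank (assemblage \<rho> P Q a 0 0 y) = 1 \<and> rank (assemblage \<rho> P Q a 1 0 y) = 2 \<and>
              rank (assemblage \<rho> P Q a 0 1 y) = 2 \<and> rank (assemblage \<rho> P Q a 1 1 y) = 1"
  proof -
    obtain z0 where z0: "z0 \<noteq> 0" "vA (pi 0 0) (vA (ki 0 0) z0) \<in> K" using K1[of 0 0 0 0] H by auto
    obtain w0 where w0: "w0 \<noteq> 0" "vA (pi 0 0) (vA (ki 0 1) w0) \<in> K" using K1[of 0 0 0 1] H by auto
    obtain z1 where z1: "z1 \<noteq> 0" "vA (pi 1 0) (vA (ki 0 0) z1) \<in> K" using K1[of 1 0 0 0] H by auto
    obtain w1 where w1: "w1 \<noteq> 0" "vA (pi 1 0) (vA (ki 0 1) w1) \<in> K" using K1[of 1 0 0 1] H by auto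
    obtain u0 where u0: "u0 \<noteq> 0" "vA (pi 0 1) (vA (ki 1 0) u0) \<in> K" using K1[of 0 1 1 0] H by auto
    obtain u0' where u0': "u0' \<noteq> 0" "vA (pi 0 1) (vA (ki 1 1) u0') \<in> K" using K1[of 0 1 1 1] H by auto
    obtain v1 where v1: "v1 \<noteq> 0" "vA (pi 1 1) (vA (ki 1 0) v1) \<in> K" using K1[of 1 1 1 0] H by auto
    obtain v1' where v1': "v1' \<noteq> 0" "vA (pi 1 1) (vA (ki 1 1) v1') \<in> K" using K1[of 1 1 1 1] H by auto
    have N0: "x = 0" if "vA (pi 0 1) (vA (ki 0 0) x) \<in> K" for x using K2[of 0 0 1 0 x] H that by auto
    have N1: "x = 0" if "vA (pi 1 1) (vA (ki 0 0) x) \<in> K" for x using K2[of 1 0 1 0 x] H that by auto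
    have d0: "d2 (ki 0 0) (ki 0 1) \<noteq> 0" using dQg[of 0 0 0 1] assms(5) by simp
    have d1: "d2 (ki 1 0) (ki 1 1) \<noteq> 0" using dQg[of 1 0 1 1] Q1 by simp
    show False
      using core[OF Ks Kd dP[of 0] dP[of 1] z0(1) z0(2) d0 w0(1) w0(2) z1(1) z1(2) d0 w1(1) w1(2)
          d1 u0(1) u0'(1) u0(2) u0'(2) d1 v1(1) v1'(1) v1(2) v1'(2) N0 N1] by simp
  qed
  show ?thesis using pat1 pat2 by blast
qed

end
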